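(* Let $0<\gamma\le1$, $0<\delta<1$, $\delta<\alpha<1$, $m\ge1$ an integer, $\Lambda_1=(0,1)$, and $\psi(t)=t^{1/\gamma}$. Assume $v\in{}_0H^{\delta/2,\psi}(\Lambda_1)\cap B^m_{\omega^{-\alpha,-1}}(\Lambda_1)$. Then (i) $\|v\|_{L^2_\psi(\Lambda_1)}\le c\|v\|_{L^2_{\omega^{-\alpha,-1}}(\Lambda_1)}$ and (ii) $\big({}^CD^{\delta,\psi}_tv,v\big)_{L^2_\psi(\Lambda_1)}\le c\,\|v'\|_{L^2_{\omega^{1-\alpha,0}}(\Lambda_1)}\|v\|_{L^2_{\omega^{-\alpha,-1}}(\Lambda_1)}$, with $c$ independent of $v$.
   Context: $(v,w)_{L^2_\psi(\Lambda_1)}=\int_0^1vw\psi'(t)dt$. For weights $\omega^{a,b}(t)=(1-t)^a t^b$ on $(0,1)$ (up to constant factors from the affine map to $(-1,1)$), $L^2_{\omega^{a,b}}(\Lambda_1)$ is the weighted $L^2$ space with norm $(\int_0^1|v|^2\omega^{a,b}dt)^{1/2}$, and $B^m_{\omega^{-\alpha,-1}}(\Lambda_1)=\{v:\partial_t^kv\in L^2_{\omega^{-\alpha+k,-1+k}}(\Lambda_1),\,0\le k\le m\}$. The $\psi$-Caputo derivative is ${}^CD^{\delta,\psi}_tv(t)=\frac{1}{\Gamma(1-\delta)}\int_0^t(\psi(t)-\psi(z))^{-\delta}v'(z)dz$. $H^{\delta/2,\psi}(\Lambda_1)$ is the space of restrictions to $\Lambda_1$ of functions $v_e$ on $\mathbb{R}$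 with $\int|v_e|^2\psi'<\infty$ and $(1+|\xi|^{\delta/2})\mathcal{F}(v_e\circ\psi^{-1})\in L^2(\mathbb{R})$, normed by the infimum over extensions of $(\int|v_e|^2\psi'+\||\xi|^{\delta/2}\mathcal{F}(v_e\circ\psi^{-1})\|^2_{L^2})^{1/2}$; ${}_0H^{\delta/2,\psi}(\Lambda_1)$ is the closure in this norm of smooth functions with compact support in $(0,1]$. *)

theory Defs
  imports "HOL-Analysis.Analysis"
begin

text \<open>The map psi(t) = t^(1/gamma), extended to the real line as an odd homeomorphism,
  its derivative and its inverse.\<close>
definition psi :: "real \<Rightarrow> real \<Rightarrow> real" where
  "psi \<gamma> t = sgn t * \<bar>t\<bar> powr (1 / \<gamma>)"

definition psi_d :: "real \<Rightarrow> real \<Rightarrow> real" where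
  "psi_d \<gamma> t = (1 / \<gamma>) * \<bar>t\<bar> powr (1 / \<gamma> - 1)"

definition psi_inv :: "real \<Rightarrow> real \<Rightarrow> real" where
  "psi_inv \<gamma> s = sgn s * \<bar>s\<bar> powr \<gamma>"

definition omega :: "real \<Rightarrow> real \<Rightarrow> real \<Rightarrow> real" where
  "omega a b t = (1 - t) powr a * t powr b"

definition in_L2w :: "real \<Rightarrow> real \<Rightarrow> (real \<Rightarrow> real) \<Rightarrow> bool" where
  "in_L2w a b v \<longleftrightarrow> set_borel_measurable lborel {0<..<1} v \<and>
     set_integrable lborel {0<..<1} (\<lambda>t. (v t)\<^sup>2 * omega a b t)"

definition norm_L2w :: "real \<Rightarrow> real \<Rightarrow> (real \<Rightarrow> real) \<Rightarrow> real" where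
  "norm_L2w a b v = sqrt (\<integral>t\<in>{0<..<1}. (v t)\<^sup>2 * omega a b t \<partial>lborel)"

definition inner_L2psi :: "real \<Rightarrow> (real \<Rightarrow> real) \<Rightarrow> (real \<Rightarrow> real) \<Rightarrow> real" where
  "inner_L2psi \<gamma> v w = (\<integral>t\<in>{0<..<1}. v t * w t * psi_d \<gamma> t \<partial>lborel)"

definition norm_L2psi :: "real \<Rightarrow> (real \<Rightarrow> real) \<Rightarrow> real" where
  "norm_L2psi \<gamma> v = sqrt (inner_L2psi \<gamma> v v)"

text \<open>psi-Caputo derivative of order delta, given the derivative dv of v.\<close>
definition caputo_psi :: "real \<Rightarrow> real \<Rightarrow> (real \<Rightarrow> real) \<Rightarrow> real \<Rightarrow> real" where
  "caputo_psi \<gamma> \<delta> dv t =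
     1 / Gamma (1 - \<delta>) * (\<integral>z\<in>{0<..<t}. (psi \<gamma> t - psi \<gamma> z) powr (- \<delta>) * dv z \<partial>lborel)"

definition smooth :: "(real \<Rightarrow> real) \<Rightarrow> bool" where
  "smooth \<phi> \<longleftrightarrow> (\<forall>k x. ((deriv ^^ k) \<phi>) differentiable (at x))"

text \<open>Test functions: smooth with compact support in R; in (0,1); in (0,1] (the latter
  only matters through the restriction to (0,1)).\<close>
definition test_R :: "(real \<Rightarrow> real) \<Rightarrow> bool" where
  "test_R \<phi> \<longleftrightarrow> smooth \<phi> \<and> (\<exists>R. \<forall>x. R < \<bar>x\<bar> \<longrightarrow> \<phi> x = 0)"

definition test_01 :: "(real \<Rightarrow> real) \<Rightarrow> bool" where
  "test_01 \<phi> \<longleftrightarrow> smooth \<phi> \<and> (\<exists>a b. 0 < a \<and> b < 1 \<and> (\<forall>x. x \<notin> {a..b} \<longrightarrow> \<phi> x = 0))"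

definition test_0_1c :: "(real \<Rightarrow> real) \<Rightarrow> bool" where
  "test_0_1c \<phi> \<longleftrightarrow> smooth \<phi> \<and> (\<exists>a>0. \<forall>x. x < a \<longrightarrow> \<phi> x = 0)"

definition weak_deriv :: "nat \<Rightarrow> (real \<Rightarrow> real) \<Rightarrow> (real \<Rightarrow> real) \<Rightarrow> bool" where
  "weak_deriv k v g \<longleftrightarrow> (\<forall>\<phi>. test_01 \<phi> \<longrightarrow>
     set_integrable lborel {0<..<1} (\<lambda>t. v t * (deriv ^^ k) \<phi> t) \<and>
     set_integrable lborel {0<..<1} (\<lambda>t. g t * \<phi> t) \<and>
     (\<integral>t\<in>{0<..<1}. v t * (deriv ^^ k) \<phi> t \<partial>lborel) =
       (-1) ^ k * (\<integral>t\<in>{0<..<1}. g t * \<phi> t \<partial>lborel))"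

text \<open>Fourier transform (unitary convention) of an integrable test function, and the
  Fourier transform of a general (L^2) function characterised by the multiplication formula
  against test functions (equivalently, in the sense of tempered distributions).\<close>
definition fourier :: "(real \<Rightarrow> real) \<Rightarrow> real \<Rightarrow> complex" where
  "fourier \<phi> x = (1 / sqrt (2 * pi)) * (\<integral>\<xi>. complex_of_real (\<phi> \<xi>) * cis (- (x * \<xi>)) \<partial>lborel)"

definition is_fourier :: "(real \<Rightarrow> real) \<Rightarrow> (real \<Rightarrow> complex) \<Rightarrow> bool" where
  "is_fourier w W \<longleftrightarrow> W \<in> borel_measurable lborel \<and> (\<forall>\<phi>. test_R \<phi> \<longrightarrow>
     integrable lborel (\<lambda>\<xi>. W \<xi> * complex_of_real (\<phi> \<xi>)) \<and>
     integrable lborel (\<lambda>x. complex_of_real (w x) * fourier \<phi> x) \<and>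
     (\<integral>\<xi>. W \<xi> * complex_of_real (\<phi> \<xi>) \<partial>lborel) =
       (\<integral>x. complex_of_real (w x) * fourier \<phi> x \<partial>lborel))"

text \<open>An admissible extension u (to R) with W = F(u o psi^{-1}) for the space H^{delta/2,psi},
  and the square of the corresponding norm expression.\<close>
definition H_ext :: "real \<Rightarrow> real \<Rightarrow> (real \<Rightarrow> real) \<Rightarrow> (real \<Rightarrow> complex) \<Rightarrow> bool" where
  "H_ext \<gamma> \<delta> u W \<longleftrightarrow> u \<in> borel_measurable lborel \<and>
     integrable lborel (\<lambda>t. (u t)\<^sup>2 * psi_d \<gamma> t) \<and>
     is_fourier (u \<circ> psi_inv \<gamma>) W \<and>
     integrable lborel (\<lambda>\<xi>. (1 + \<bar>\<xi>\<bar> powr (\<delta> / 2))\<^sup>2 * (cmod (W \<xi>))\<^sup>2)"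

definition H_ext_sq :: "real \<Rightarrow> real \<Rightarrow> (real \<Rightarrow> real) \<Rightarrow> (real \<Rightarrow> complex) \<Rightarrow> real" where
  "H_ext_sq \<gamma> \<delta> u W = (\<integral>t. (u t)\<^sup>2 * psi_d \<gamma> t \<partial>lborel) +
     (\<integral>\<xi>. \<bar>\<xi>\<bar> powr \<delta> * (cmod (W \<xi>))\<^sup>2 \<partial>lborel)"

text \<open>v belongs to the closure 0H^{delta/2,psi}(0,1) of smooth functions with compact support
  in (0,1]: for every eps there is such a phi with ||v - phi||_H < eps, the norm being the
  infimum over extensions.\<close>
definition in_0H :: "real \<Rightarrow> real \<Rightarrow> (real \<Rightarrow> real) \<Rightarrow> bool" where
  "in_0H \<gamma> \<delta> v \<longleftrightarrow> (\<forall>\<epsilon>>0. \<exists>\<phi> u W. test_0_1c \<phi> \<and>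
     (\<forall>t\<in>{0<..<1}. u t = v t - \<phi> t) \<and> H_ext \<gamma> \<delta> u W \<and> H_ext_sq \<gamma> \<delta> u W < \<epsilon>\<^sup>2)"

text \<open>v in B^m_{omega^{-alpha,-1}}(0,1) with g k its k-th weak derivative (g 0 = v).\<close>
definition in_Bm :: "nat \<Rightarrow> real \<Rightarrow> (real \<Rightarrow> real) \<Rightarrow> (nat \<Rightarrow> real \<Rightarrow> real) \<Rightarrow> bool" where
  "in_Bm m \<alpha> v g \<longleftrightarrow> g 0 = v \<and>
     (\<forall>k\<le>m. weak_deriv k v (g k) \<and> in_L2w (- \<alpha> + real k) (-1 + real k) (g k))"

end

theory Submission
  imports Defs
begin

lemma powint:
  fixes L d :: real assumes "0 < L" "0 < d" "d < 1"
  shows "(\<integral>\<^sup>+s. ennreal (s powr (-d)) * indicator {0<..<L} s \<partial>lborel) = ennreal (L powr (1-d) / (1-d))"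
proof -
  have "((\<lambda>x. x powr (-d)) has_integral (L powr (-d+1) / (-d+1))) {0..L}"
    using assms by (intro has_integral_powr_from_0) auto
  hence "((\<lambda>x. x powr (-d)) has_integral (L powr (1-d) / (1-d))) {0..L}"
    by (simp add: add.commute)
  hence "((\<lambda>x. x powr (-d)) has_integral (L powr (1-d) / (1-d))) {0<..<L}"
    using has_integral_Icc_iff_Ioo by blast
  thus ?thesis by (intro nn_integral_has_integral_lebesgue') auto
qed

lemma K1:
  fixes t d :: real assumes "0 < t" "0 < d" "d < 1"
  shows "(\<integral>\<^sup>+z. ennreal ((t - z) powr (-d)) * indicator {0<..<t} z \<partial>lborel) = ennreal (t powr (1-d) / (1-d))"
proof -
  have "(\<integral>\<^sup>+z. ennreal ((t - z) powr (-d)) * indicator {0<..<t} z \<partial>lborel)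
     = ennreal \<bar>-1::real\<bar> * (\<integral>\<^sup>+s. ennreal ((t - (t + (-1) * s)) powr (-d)) * indicator {0<..<t} (t + (-1) * s) \<partial>lborel)"
    by (rule nn_integral_real_affine) auto
  also have "ennreal \<bar>-1::real\<bar> = 1" by simp
  also have "(\<integral>\<^sup>+s. ennreal ((t - (t + (-1) * s)) powr (-d)) * indicator {0<..<t} (t + (-1) * s) \<partial>lborel) = (\<integral>\<^sup>+s. ennreal (s powr (-d)) * indicator {0<..<t} s \<partial>lborel)"
    by (intro nn_integral_cong) (auto split: split_indicator)
  finally show ?thesis using powint assms by simp
qed

lemma K2:
  fixes z d :: real assumes "z < 1" "0 < d" "d < 1"
  shows "(\<integral>\<^sup>+t. ennreal ((t - z) powr (-d)) * indicator {z<..<1} t \<partial>lborel) = ennreal ((1 - z) powr (1-d) / (1-d))"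
proof -
  have "(\<integral>\<^sup>+t. ennreal ((t - z) powr (-d)) * indicator {z<..<1} t \<partial>lborel)
     = ennreal \<bar>1::real\<bar> * (\<integral>\<^sup>+s. ennreal ((z + 1 * s - z) powr (-d)) * indicator {z<..<1} (z + 1 * s) \<partial>lborel)"
    by (rule nn_integral_real_affine) auto
  also have "ennreal \<bar>1::real\<bar> = 1" by simp
  also have "(\<integral>\<^sup>+s. ennreal ((z + 1 * s - z) powr (-d)) * indicator {z<..<1} (z + 1 * s) \<partial>lborel) = (\<integral>\<^sup>+s. ennreal (s powr (-d)) * indicator {0<..<1-z} s \<partial>lborel)"
    by (intro nn_integral_cong) (auto split: split_indicator)
  finally show ?thesis using powint[of "1-z" d] assms by simp
qed

lemma set_nn:
  fixes f :: "real \<Rightarrow> real"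
  assumes "set_integrable lborel A f" "\<And>x. x \<in> A \<Longrightarrow> 0 \<le> f x"
  shows "(\<integral>\<^sup>+x. ennreal (f x) * indicator A x \<partial>lborel) = ennreal (set_lebesgue_integral lborel A f)"
proof -
  have "(\<integral>\<^sup>+x. ennreal (f x) * indicator A x \<partial>lborel) = (\<integral>\<^sup>+x. ennreal (indicator A x *\<^sub>R f x) \<partial>lborel)"
    by (intro nn_integral_cong) (auto split: split_indicator)
  also have "\<dots> = ennreal (\<integral>x. indicator A x *\<^sub>R f x \<partial>lborel)"
    using assms unfolding set_integrable_def
    by (intro nn_integral_eq_integral) (auto split: split_indicator)
  finally show ?thesis by (simp add: set_lebesgue_integral_def)
qed

lemma pq1: fixes p q :: real assumes "p > 0" "q > 0" shows "(q / p) * (p * p) = p * q"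
  using assms by (simp add: field_simps)
lemma pq2: fixes p q :: real assumes "p > 0" "q > 0" shows "(q * q) / (q / p) = p * q"
  using assms by (simp add: field_simps)
lemma amgm_opt:
  fixes x a b K :: real
  assumes "0 \<le> a" "0 \<le> b" "0 \<le> K" "\<And>l. l > 0 \<Longrightarrow> x \<le> K * (l * a + b / l)"
  shows "x \<le> 2 * K * sqrt a * sqrt b"
proof (cases "a > 0 \<and> b > 0")
  case True
  have sa: "sqrt a > 0" "sqrt b > 0" using True by auto
  have "x \<le> K * ((sqrt b / sqrt a) * a + b / (sqrt b / sqrt a))"
    using True sa by (intro assms(4)) auto
  also have "(sqrt b / sqrt a) * a = sqrt a * sqrt b"
    using pq1[OF sa] True by simp
  also have "b / (sqrt b / sqrt a) = sqrt a * sqrt b"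
    using pq2[OF sa] True by simp
  finally show ?thesis by simp
next
  case False
  show ?thesis
  proof (rule ccontr)
    assume "\<not> ?thesis"
    with False assms have x: "x > 0" by auto
    show False
    proof (cases "a = 0")
      case True
      have "K * b \<ge> 0" using assms by simp
      hence "K * b + 1 > 0" by simp
      hence "x \<le> K * (((K * b + 1) / x) * a + b / ((K * b + 1) / x))" using assms(4)[of "(K * b + 1) / x"] x by simp
      also have "\<dots> = x * (K * b / (K * b + 1))" using x True by simp
      also have "\<dots> < x" using x assms \<open>K * b + 1 > 0\<close> by (simp add: mult_less_cancel_left1 field_simps)
      finally show False by simp
    next
      case False
      hence b: "b = 0" using \<open>\<not> (a > 0 \<and> b > 0)\<close> assms by auto
      have "K * a \<ge> 0" using assms by simp
      hence "K * a + 1 > 0" by simp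
      hence "x \<le> K * ((x / (K * a + 1)) * a + b / (x / (K * a + 1)))" using assms(4)[of "x / (K * a + 1)"] x by simp
      also have "\<dots> = x * (K * a / (K * a + 1))" using x b by simp
      also have "\<dots> < x" using x assms \<open>K * a + 1 > 0\<close> by (simp add: mult_less_cancel_left1 field_simps)
      finally show False by simp
    qed
  qed
qed

lemma kern:
  fixes g d t z :: real
  assumes "0 < g" "g \<le> 1" "0 < d" "d < 1" "0 < z" "z < t" "t < 1"
  shows "psi_d g t * (psi g t - psi g z) powr (-d) \<le> (1/g) * (t - z) powr (-d)"
proof -
  define p where "p = 1/g"
  have p1: "p \<ge> 1" using assms by (simp add: p_def)
  have pt: "psi g t = t powr p" "psi g z = z powr p" using assms by (auto simp: psi_def p_def)
  have pd: "psi_d g t = p * t powr (p - 1)" using assms by (simp add: psi_d_def p_def)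
  have tp: "t powr p = t powr (p-1) * t" using assms by (simp add: powr_diff)
  have zp: "z powr p = z powr (p-1) * z" using assms by (simp add: powr_diff)
  have zt: "z powr (p-1) \<le> t powr (p-1)" using assms p1 by (intro powr_mono2) auto
  define A where "A = t powr (p-1) * (t - z)"
  have A0: "A > 0" using assms by (simp add: A_def)
  have "t powr p - z powr p = A + z * (t powr (p-1) - z powr (p-1))"
    unfolding tp zp A_def by (simp add: algebra_simps)
  also have "\<dots> \<ge> A" using zt assms by simp
  finally have DA: "A \<le> psi g t - psi g z" using pt by simp
  have "(psi g t - psi g z) powr (-d) \<le> A powr (-d)"
    using DA A0 assms by (intro powr_mono2') auto
  also have "A powr (-d) = (t powr (p-1)) powr (-d) * (t - z) powr (-d)"
    unfolding A_def using assms by (auto intro!: powr_mult)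
  also have "(t powr (p-1)) powr (-d) = t powr ((1-p)*d)"
    by (simp add: powr_powr algebra_simps)
  finally have 1: "(psi g t - psi g z) powr (-d) \<le> t powr ((1-p)*d) * (t - z) powr (-d)" .
  have "psi_d g t * (psi g t - psi g z) powr (-d) \<le> p * t powr (p - 1) * (t powr ((1-p)*d) * (t - z) powr (-d))"
    unfolding pd using 1 p1 by (intro mult_left_mono) auto
  also have "\<dots> = p * t powr ((p-1)*(1-d)) * (t - z) powr (-d)"
    using assms by (simp add: powr_add[symmetric] algebra_simps)
  also have "\<dots> \<le> p * 1 * (t - z) powr (-d)"
    using assms p1 by (intro mult_right_mono mult_left_mono powr_le1) auto
  finally show ?thesis by (simp add: p_def)
qed
lemma amgm2:
  fixes l a b :: real assumes "l > 0"
  shows "\<bar>a\<bar> * \<bar>b\<bar> \<le> l/2 * a\<^sup>2 + 1/(2*l) * b\<^sup>2"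
proof -
  have "0 \<le> (l * \<bar>a\<bar> - \<bar>b\<bar>)\<^sup>2" by simp
  hence "2 * l * (\<bar>a\<bar> * \<bar>b\<bar>) \<le> l\<^sup>2 * a\<^sup>2 + b\<^sup>2" by (simp add: power2_eq_square algebra_simps)
  hence "\<bar>a\<bar> * \<bar>b\<bar> \<le> (l\<^sup>2 * a\<^sup>2 + b\<^sup>2) / (2 * l)" using assms by (simp add: field_simps)
  also have "\<dots> = l/2 * a\<^sup>2 + 1/(2*l) * b\<^sup>2" using assms by (simp add: field_simps power2_eq_square)
  finally show ?thesis .
qed

lemma alg: fixes c e l G V :: real assumes "e \<noteq> 0" "l \<noteq> 0"
  shows "c * (l/2 * (1/e * G) + 1/(2*l) * (1/e * V)) = c / (2 * e) * (l * G + V / l)"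
  using assms by (simp add: field_simps)

lemma two_div: fixes c x :: real assumes "x \<noteq> 0" shows "2 * (c / (2 * x)) = c / x"
  using assms by (simp add: field_simps)


lemma sqrt_le_self:
  fixes x :: real assumes "1 \<le> x" shows "sqrt x \<le> x"
proof -
  have "1 * x \<le> x * x" using assms by (intro mult_right_mono) auto
  hence "x \<le> x\<^sup>2" by (simp add: power2_eq_square)
  hence "sqrt x \<le> sqrt (x\<^sup>2)" by (rule real_sqrt_le_mono)
  thus ?thesis using assms by simp
qed

lemma absbound:
  fixes f :: "'a \<Rightarrow> real"
  shows "ennreal \<bar>integral\<^sup>L M f\<bar> \<le> (\<integral>\<^sup>+x. ennreal \<bar>f x\<bar> \<partial>M)"
proof (cases "integrable M f")
  case True
  then show ?thesis using integral_norm_bound_ennreal[OF True] by simp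
next
  case False
  then show ?thesis by (simp add: not_integrable_integral_eq)
qed

lemma omega_ge1:
  fixes a t :: real assumes "0 \<le> a" "0 < t" "t < 1"
  shows "1 \<le> omega (-a) (-1) t"
proof -
  have "(1 - t) powr a \<le> 1" using assms by (intro powr_le1) auto
  moreover have "(1 - t) powr a > 0" using assms by simp
  ultimately have 1: "1 \<le> (1 - t) powr (-a)" by (simp add: powr_minus one_le_inverse)
  have 2: "1 \<le> t powr (-1)" using assms by (simp add: powr_minus one_le_inverse powr_one)
  have "1 * 1 \<le> (1 - t) powr (-a) * t powr (-1)" using 1 2 by (intro mult_mono) auto
  thus ?thesis by (simp add: omega_def)
qed

lemma omega_nonneg: "0 \<le> omega a b t" by (simp add: omega_def)

lemma main_ii:
  fixes \<gamma> \<delta> \<alpha> :: real and v g1 :: "real \<Rightarrow> real"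
  assumes ga: "0 < \<gamma>" "\<gamma> \<le> 1" and de: "0 < \<delta>" "\<delta> < 1" "\<delta> < \<alpha>" "\<alpha> < 1"
  and mv: "set_borel_measurable lborel {0<..<1} v"
  and iv: "set_integrable lborel {0<..<1} (\<lambda>t. (v t)\<^sup>2 * omega (-\<alpha>) (-1) t)"
  and mg: "set_borel_measurable lborel {0<..<1} g1"
  and ig: "set_integrable lborel {0<..<1} (\<lambda>t. (g1 t)\<^sup>2 * omega (1-\<alpha>) 0 t)"
  shows "inner_L2psi \<gamma> (caputo_psi \<gamma> \<delta> g1) v
     \<le> ((1/\<gamma>) / Gamma (1-\<delta>) / (1-\<delta>)) * norm_L2w (1-\<alpha>) 0 g1 * norm_L2w (-\<alpha>) (-1) v"
proof -
  define vi where "vi = (\<lambda>t. indicator {0<..<1::real} t *\<^sub>R v t)"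
  define gi where "gi = (\<lambda>t. indicator {0<..<1::real} t *\<^sub>R g1 t)"
  have [measurable]: "vi \<in> borel_measurable lborel" "gi \<in> borel_measurable lborel"
    using mv mg unfolding vi_def gi_def set_borel_measurable_def by auto
  have [measurable]: "vi \<in> borel_measurable borel" "gi \<in> borel_measurable borel"
    using mv mg unfolding vi_def gi_def set_borel_measurable_def by auto
  have [measurable]: "\<And>a b. (\<lambda>t. omega a b t) \<in> borel_measurable borel"
    unfolding omega_def by measurable
  define Ga where "Ga = Gamma (1 - \<delta>)"
  have Ga: "Ga > 0" using de by (simp add: Ga_def)
  define c0 where "c0 = (1/\<gamma>) / Ga"
  have c0: "c0 > 0" using Ga ga by (simp add: c0_def)
  define G2 where "G2 = (\<integral>t\<in>{0<..<1}. (g1 t)\<^sup>2 * omega (1-\<alpha>) 0 t \<partial>lborel)"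
  define V2 where "V2 = (\<integral>t\<in>{0<..<1}. (v t)\<^sup>2 * omega (-\<alpha>) (-1) t \<partial>lborel)"
  have G2e: "(\<integral>\<^sup>+z. ennreal ((g1 z)\<^sup>2 * omega (1-\<alpha>) 0 z) * indicator {0<..<1} z \<partial>lborel) = ennreal G2"
    unfolding G2_def by (intro set_nn ig) (simp add: omega_nonneg)
  have V2e: "(\<integral>\<^sup>+z. ennreal ((v z)\<^sup>2 * omega (-\<alpha>) (-1) z) * indicator {0<..<1} z \<partial>lborel) = ennreal V2"
    unfolding V2_def by (intro set_nn iv) (simp add: omega_nonneg)
  have G20: "G2 \<ge> 0" unfolding G2_def set_lebesgue_integral_def
    by (intro integral_nonneg_AE) (auto simp: omega_nonneg split: split_indicator)
  have V20: "V2 \<ge> 0" unfolding V2_def set_lebesgue_integral_def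
    by (intro integral_nonneg_AE) (auto simp: omega_nonneg split: split_indicator)
  define H where "H = (\<lambda>t z::real. if 0 < z \<and> z < t \<and> t < 1 then ennreal ((t - z) powr (-\<delta>) * \<bar>gi z\<bar> * \<bar>vi t\<bar>) else 0)"
  define H1 where "H1 = (\<lambda>t z::real. if 0 < z \<and> z < t \<and> t < 1 then ennreal ((t - z) powr (-\<delta>) * (gi z)\<^sup>2) else 0)"
  define H2 where "H2 = (\<lambda>t z::real. if 0 < z \<and> z < t \<and> t < 1 then ennreal ((t - z) powr (-\<delta>) * (vi t)\<^sup>2) else 0)"
  have mH[measurable]: "case_prod H \<in> borel_measurable (lborel \<Otimes>\<^sub>M lborel)"
    unfolding H_def by measurable
  have mH1[measurable]: "case_prod H1 \<in> borel_measurable (lborel \<Otimes>\<^sub>M lborel)"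
    unfolding H1_def by measurable
  have mH2[measurable]: "case_prod H2 \<in> borel_measurable (lborel \<Otimes>\<^sub>M lborel)"
    unfolding H2_def by measurable
  have S1: "ennreal (\<bar>caputo_psi \<gamma> \<delta> g1 t\<bar> * psi_d \<gamma> t * \<bar>v t\<bar>) \<le> ennreal c0 * (\<integral>\<^sup>+z. H t z \<partial>lborel)"
    if t: "0 < t" "t < 1" for t
  proof -
    define F where "F = (\<lambda>z. indicator {0<..<t} z *\<^sub>R ((psi \<gamma> t - psi \<gamma> z) powr (-\<delta>) * g1 z))"
    have F: "F = (\<lambda>z. indicator {0<..<t} z * ((psi \<gamma> t - psi \<gamma> z) powr (-\<delta>) * gi z))"
      using t by (auto simp: F_def gi_def fun_eq_iff split: split_indicator)
    have mF[measurable]: "(\<lambda>z. ennreal \<bar>F z\<bar>) \<in> borel_measurable lborel"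
      unfolding F psi_def by measurable
    have cap: "caputo_psi \<gamma> \<delta> g1 t = 1 / Ga * integral\<^sup>L lborel F"
      by (simp add: caputo_psi_def Ga_def F_def set_lebesgue_integral_def)
    have pd0: "psi_d \<gamma> t \<ge> 0" using ga by (simp add: psi_d_def)
    define a where "a = psi_d \<gamma> t * \<bar>v t\<bar> / Ga"
    have a0: "a \<ge> 0" using pd0 Ga by (simp add: a_def)
    have "ennreal (\<bar>caputo_psi \<gamma> \<delta> g1 t\<bar> * psi_d \<gamma> t * \<bar>v t\<bar>) = ennreal a * ennreal \<bar>integral\<^sup>L lborel F\<bar>"
      using Ga pd0 a0 by (simp add: cap a_def ennreal_mult[symmetric] abs_mult)
    also have "\<dots> \<le> ennreal a * (\<integral>\<^sup>+z. ennreal \<bar>F z\<bar> \<partial>lborel)"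
      by (intro mult_left_mono absbound) auto
    also have "\<dots> = (\<integral>\<^sup>+z. ennreal a * ennreal \<bar>F z\<bar> \<partial>lborel)"
      by (rule nn_integral_cmult[symmetric]) measurable
    also have "\<dots> \<le> (\<integral>\<^sup>+z. ennreal c0 * H t z \<partial>lborel)"
    proof (intro nn_integral_mono)
      fix z
      show "ennreal a * ennreal \<bar>F z\<bar> \<le> ennreal c0 * H t z"
      proof (cases "0 < z \<and> z < t")
        case True
        have k: "psi_d \<gamma> t * (psi \<gamma> t - psi \<gamma> z) powr (-\<delta>) \<le> (1/\<gamma>) * (t - z) powr (-\<delta>)"
          using True t ga de by (intro kern) auto
        have "a * \<bar>F z\<bar> = (psi_d \<gamma> t * (psi \<gamma> t - psi \<gamma> z) powr (-\<delta>)) * (\<bar>g1 z\<bar> * \<bar>v t\<bar>) / Ga"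
          using True t by (simp add: a_def F_def abs_mult)
        also have "\<dots> \<le> ((1/\<gamma>) * (t - z) powr (-\<delta>)) * (\<bar>g1 z\<bar> * \<bar>v t\<bar>) / Ga"
          using k Ga by (intro divide_right_mono mult_right_mono) auto
        also have "\<dots> = c0 * ((t - z) powr (-\<delta>) * \<bar>gi z\<bar> * \<bar>vi t\<bar>)"
          using True t by (simp add: c0_def gi_def vi_def)
        finally have "a * \<bar>F z\<bar> \<le> c0 * ((t - z) powr (-\<delta>) * \<bar>gi z\<bar> * \<bar>vi t\<bar>)" .
        hence "ennreal (a * \<bar>F z\<bar>) \<le> ennreal (c0 * ((t - z) powr (-\<delta>) * \<bar>gi z\<bar> * \<bar>vi t\<bar>))"
          by (rule ennreal_leI)
        thus ?thesis using True t a0 c0 by (simp add: H_def ennreal_mult[symmetric])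
      next
        case False
        thus ?thesis by (simp add: F_def)
      qed
    qed
    also have "\<dots> = ennreal c0 * (\<integral>\<^sup>+z. H t z \<partial>lborel)"
      by (rule nn_integral_cmult) measurable
    finally show ?thesis .
  qed
  have S2: "ennreal \<bar>inner_L2psi \<gamma> (caputo_psi \<gamma> \<delta> g1) v\<bar> \<le> ennreal c0 * (\<integral>\<^sup>+t. (\<integral>\<^sup>+z. H t z \<partial>lborel) \<partial>lborel)"
  proof -
    have "inner_L2psi \<gamma> (caputo_psi \<gamma> \<delta> g1) v = integral\<^sup>L lborel (\<lambda>t. indicator {0<..<1} t *\<^sub>R (caputo_psi \<gamma> \<delta> g1 t * v t * psi_d \<gamma> t))"
      by (simp add: inner_L2psi_def set_lebesgue_integral_def)
    hence "ennreal \<bar>inner_L2psi \<gamma> (caputo_psi \<gamma> \<delta> g1) v\<bar> \<le> (\<integral>\<^sup>+t. ennreal \<bar>indicator {0<..<1} t *\<^sub>R (caputo_psi \<gamma> \<delta> g1 t * v t * psi_d \<gamma> t)\<bar> \<partial>lborel)"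
      using absbound by metis
    also have "\<dots> \<le> (\<integral>\<^sup>+t. ennreal c0 * (\<integral>\<^sup>+z. H t z \<partial>lborel) \<partial>lborel)"
    proof (intro nn_integral_mono)
      fix t :: real
      show "ennreal \<bar>indicator {0<..<1} t *\<^sub>R (caputo_psi \<gamma> \<delta> g1 t * v t * psi_d \<gamma> t)\<bar> \<le> ennreal c0 * (\<integral>\<^sup>+z. H t z \<partial>lborel)"
      proof (cases "0 < t \<and> t < 1")
        case True
        have pd0: "psi_d \<gamma> t \<ge> 0" using ga by (simp add: psi_d_def)
        have "\<bar>indicator {0<..<1} t *\<^sub>R (caputo_psi \<gamma> \<delta> g1 t * v t * psi_d \<gamma> t)\<bar> = \<bar>caputo_psi \<gamma> \<delta> g1 t\<bar> * psi_d \<gamma> t * \<bar>v t\<bar>"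
          using True pd0 by (simp add: abs_mult)
        thus ?thesis using S1[of t] True by simp
      next
        case False
        thus ?thesis by simp
      qed
    qed
    also have "\<dots> = ennreal c0 * (\<integral>\<^sup>+t. (\<integral>\<^sup>+z. H t z \<partial>lborel) \<partial>lborel)"
      by (rule nn_integral_cmult) measurable
    finally show ?thesis .
  qed
  have S3: "(\<integral>\<^sup>+t. (\<integral>\<^sup>+z. H t z \<partial>lborel) \<partial>lborel) \<le> ennreal (l/2) * (\<integral>\<^sup>+t. (\<integral>\<^sup>+z. H1 t z \<partial>lborel) \<partial>lborel) + ennreal (1/(2*l)) * (\<integral>\<^sup>+t. (\<integral>\<^sup>+z. H2 t z \<partial>lborel) \<partial>lborel)"
    if l: "l > 0" for l
  proof -
    have "(\<integral>\<^sup>+t. (\<integral>\<^sup>+z. H t z \<partial>lborel) \<partial>lborel) \<le> (\<integral>\<^sup>+t. (\<integral>\<^sup>+z. ennreal (l/2) * H1 t z + ennreal (1/(2*l)) * H2 t z \<partial>lborel) \<partial>lborel)"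
    proof (intro nn_integral_mono)
      fix t z :: real
      show "H t z \<le> ennreal (l/2) * H1 t z + ennreal (1/(2*l)) * H2 t z"
      proof (cases "0 < z \<and> z < t \<and> t < 1")
        case True
        define k where "k = (t - z) powr (-\<delta>)"
        have k0: "k \<ge> 0" by (simp add: k_def)
        have "k * (\<bar>gi z\<bar> * \<bar>vi t\<bar>) \<le> k * (l/2 * (gi z)\<^sup>2 + 1/(2*l) * (vi t)\<^sup>2)"
          by (rule mult_left_mono[OF amgm2[OF l] k0])
        hence "k * \<bar>gi z\<bar> * \<bar>vi t\<bar> \<le> l/2 * (k * (gi z)\<^sup>2) + 1/(2*l) * (k * (vi t)\<^sup>2)"
          by (simp add: algebra_simps)
        hence "ennreal (k * \<bar>gi z\<bar> * \<bar>vi t\<bar>) \<le> ennreal (l/2 * (k * (gi z)\<^sup>2) + 1/(2*l) * (k * (vi t)\<^sup>2))"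
          by (rule ennreal_leI)
        also have "\<dots> = ennreal (l/2) * ennreal (k * (gi z)\<^sup>2) + ennreal (1/(2*l)) * ennreal (k * (vi t)\<^sup>2)"
          using l k0 by (simp add: ennreal_plus[symmetric] ennreal_mult[symmetric] del: ennreal_plus)
        finally show ?thesis using True by (simp add: H_def H1_def H2_def k_def)
      next
        case False
        hence "H t z = 0" unfolding H_def by auto
        thus ?thesis by simp
      qed
    qed
    also have "\<dots> = (\<integral>\<^sup>+t. ennreal (l/2) * (\<integral>\<^sup>+z. H1 t z \<partial>lborel) + ennreal (1/(2*l)) * (\<integral>\<^sup>+z. H2 t z \<partial>lborel) \<partial>lborel)"
      by (intro nn_integral_cong) (simp add: nn_integral_add nn_integral_cmult)
    also have "\<dots> = ennreal (l/2) * (\<integral>\<^sup>+t. (\<integral>\<^sup>+z. H1 t z \<partial>lborel) \<partial>lborel) + ennreal (1/(2*l)) * (\<integral>\<^sup>+t. (\<integral>\<^sup>+z. H2 t z \<partial>lborel) \<partial>lborel)"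
      by (simp add: nn_integral_add nn_integral_cmult)
    finally show ?thesis .
  qed
  have V2e': "(\<integral>\<^sup>+t. ennreal ((vi t)\<^sup>2 * omega (-\<alpha>) (-1) t) * indicator {0<..<1} t \<partial>lborel) = ennreal V2"
    unfolding V2e[symmetric] by (intro nn_integral_cong) (simp add: vi_def split: split_indicator)
  have G2e': "(\<integral>\<^sup>+t. ennreal ((gi t)\<^sup>2 * omega (1-\<alpha>) 0 t) * indicator {0<..<1} t \<partial>lborel) = ennreal G2"
    unfolding G2e[symmetric] by (intro nn_integral_cong) (simp add: gi_def split: split_indicator)
  have S4: "(\<integral>\<^sup>+t. (\<integral>\<^sup>+z. H2 t z \<partial>lborel) \<partial>lborel) \<le> ennreal (1/(1-\<delta>)) * ennreal V2"
  proof -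
    have "(\<integral>\<^sup>+t. (\<integral>\<^sup>+z. H2 t z \<partial>lborel) \<partial>lborel) \<le> (\<integral>\<^sup>+t. ennreal (1/(1-\<delta>)) * (ennreal ((vi t)\<^sup>2 * omega (-\<alpha>) (-1) t) * indicator {0<..<1} t) \<partial>lborel)"
    proof (intro nn_integral_mono)
      fix t :: real
      show "(\<integral>\<^sup>+z. H2 t z \<partial>lborel) \<le> ennreal (1/(1-\<delta>)) * (ennreal ((vi t)\<^sup>2 * omega (-\<alpha>) (-1) t) * indicator {0<..<1} t)"
      proof (cases "0 < t \<and> t < 1")
        case True
        have "(\<integral>\<^sup>+z. H2 t z \<partial>lborel) = (\<integral>\<^sup>+z. ennreal ((vi t)\<^sup>2) * (ennreal ((t - z) powr (-\<delta>)) * indicator {0<..<t} z) \<partial>lborel)"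
          using True by (intro nn_integral_cong) (auto simp: H2_def ennreal_mult[symmetric] mult.commute split: split_indicator)
        also have "\<dots> = ennreal ((vi t)\<^sup>2) * ennreal (t powr (1-\<delta>) / (1-\<delta>))"
          using True de by (simp add: nn_integral_cmult K1)
        also have "\<dots> = ennreal ((vi t)\<^sup>2 * (t powr (1-\<delta>) / (1-\<delta>)))"
          using de by (intro ennreal_mult[symmetric]) auto
        also have "\<dots> \<le> ennreal (1/(1-\<delta>) * ((vi t)\<^sup>2 * omega (-\<alpha>) (-1) t))"
        proof (rule ennreal_leI)
          have "t powr (1-\<delta>) \<le> 1" using True de by (intro powr_le1) auto
          also have "1 \<le> omega (-\<alpha>) (-1) t" using True de by (intro omega_ge1) auto
          finally have "(vi t)\<^sup>2 * t powr (1-\<delta>) \<le> (vi t)\<^sup>2 * omega (-\<alpha>) (-1) t"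
            by (intro mult_left_mono) auto
          thus "(vi t)\<^sup>2 * (t powr (1-\<delta>) / (1-\<delta>)) \<le> 1/(1-\<delta>) * ((vi t)\<^sup>2 * omega (-\<alpha>) (-1) t)"
            using de by (simp add: divide_right_mono)
        qed
        also have "\<dots> = ennreal (1/(1-\<delta>)) * (ennreal ((vi t)\<^sup>2 * omega (-\<alpha>) (-1) t) * indicator {0<..<1} t)"
          using True de by (simp add: ennreal_mult[symmetric] omega_nonneg)
        finally show ?thesis .
      next
        case False
        hence "\<And>z. H2 t z = 0" unfolding H2_def by auto
        thus ?thesis by simp
      qed
    qed
    also have "\<dots> = ennreal (1/(1-\<delta>)) * ennreal V2"
      by (subst nn_integral_cmult) (measurable, simp add: V2e')
    finally show ?thesis .
  qed
  have S5: "(\<integral>\<^sup>+t. (\<integral>\<^sup>+z. H1 t z \<partial>lborel) \<partial>lborel) \<le> ennreal (1/(1-\<delta>)) * ennreal G2"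
  proof -
    have mH1'[measurable]: "case_prod (\<lambda>z t. H1 t z) \<in> borel_measurable (lborel \<Otimes>\<^sub>M lborel)"
      unfolding H1_def by measurable
    have "(\<integral>\<^sup>+t. (\<integral>\<^sup>+z. H1 t z \<partial>lborel) \<partial>lborel) = (\<integral>\<^sup>+z. (\<integral>\<^sup>+t. H1 t z \<partial>lborel) \<partial>lborel)"
      using lborel_pair.Fubini'[OF mH1'] by simp
    also have "\<dots> \<le> (\<integral>\<^sup>+z. ennreal (1/(1-\<delta>)) * (ennreal ((gi z)\<^sup>2 * omega (1-\<alpha>) 0 z) * indicator {0<..<1} z) \<partial>lborel)"
    proof (intro nn_integral_mono)
      fix z :: real
      show "(\<integral>\<^sup>+t. H1 t z \<partial>lborel) \<le> ennreal (1/(1-\<delta>)) * (ennreal ((gi z)\<^sup>2 * omega (1-\<alpha>) 0 z) * indicator {0<..<1} z)"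
      proof (cases "0 < z \<and> z < 1")
        case True
        have "(\<integral>\<^sup>+t. H1 t z \<partial>lborel) = (\<integral>\<^sup>+t. ennreal ((gi z)\<^sup>2) * (ennreal ((t - z) powr (-\<delta>)) * indicator {z<..<1} t) \<partial>lborel)"
          using True by (intro nn_integral_cong) (auto simp: H1_def ennreal_mult[symmetric] mult.commute split: split_indicator)
        also have "\<dots> = ennreal ((gi z)\<^sup>2) * ennreal ((1 - z) powr (1-\<delta>) / (1-\<delta>))"
          using True de by (simp add: nn_integral_cmult K2)
        also have "\<dots> = ennreal ((gi z)\<^sup>2 * ((1 - z) powr (1-\<delta>) / (1-\<delta>)))"
          using de by (intro ennreal_mult[symmetric]) auto
        also have "\<dots> \<le> ennreal (1/(1-\<delta>) * ((gi z)\<^sup>2 * omega (1-\<alpha>) 0 z))"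
        proof (rule ennreal_leI)
          have "(1 - z) powr (1-\<delta>) \<le> (1 - z) powr (1-\<alpha>)" using True de by (intro powr_mono') auto
          also have "\<dots> = omega (1-\<alpha>) 0 z" using True by (simp add: omega_def)
          finally have "(gi z)\<^sup>2 * (1 - z) powr (1-\<delta>) \<le> (gi z)\<^sup>2 * omega (1-\<alpha>) 0 z"
            by (intro mult_left_mono) auto
          thus "(gi z)\<^sup>2 * ((1 - z) powr (1-\<delta>) / (1-\<delta>)) \<le> 1/(1-\<delta>) * ((gi z)\<^sup>2 * omega (1-\<alpha>) 0 z)"
            using de by (simp add: divide_right_mono)
        qed
        also have "\<dots> = ennreal (1/(1-\<delta>)) * (ennreal ((gi z)\<^sup>2 * omega (1-\<alpha>) 0 z) * indicator {0<..<1} z)"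
          using True de by (simp add: ennreal_mult[symmetric] omega_nonneg)
        finally show ?thesis .
      next
        case False
        hence "\<And>t. H1 t z = 0" unfolding H1_def by auto
        thus ?thesis by simp
      qed
    qed
    also have "\<dots> = ennreal (1/(1-\<delta>)) * ennreal G2"
      by (subst nn_integral_cmult) (measurable, simp add: G2e')
    finally show ?thesis .
  qed
  define K where "K = c0 / (2 * (1 - \<delta>))"
  have K0: "K \<ge> 0" using c0 de by (simp add: K_def)
  have S6: "\<bar>inner_L2psi \<gamma> (caputo_psi \<gamma> \<delta> g1) v\<bar> \<le> K * (l * G2 + V2 / l)" if l: "l > 0" for l
  proof -
    have "ennreal \<bar>inner_L2psi \<gamma> (caputo_psi \<gamma> \<delta> g1) v\<bar> \<le> ennreal c0 * (ennreal (l/2) * (ennreal (1/(1-\<delta>)) * ennreal G2) + ennreal (1/(2*l)) * (ennreal (1/(1-\<delta>)) * ennreal V2))"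
      using S2 S3[OF l] S4 S5 by (smt (verit) add_mono mult_left_mono order_trans zero_le)
    also have "\<dots> = ennreal (c0 * (l/2 * (1/(1-\<delta>) * G2) + 1/(2*l) * (1/(1-\<delta>) * V2)))"
      using c0 l de G20 V20 by (simp add: ennreal_mult[symmetric] ennreal_plus[symmetric] del: ennreal_plus)
    finally have "\<bar>inner_L2psi \<gamma> (caputo_psi \<gamma> \<delta> g1) v\<bar> \<le> c0 * (l/2 * (1/(1-\<delta>) * G2) + 1/(2*l) * (1/(1-\<delta>) * V2))"
      using c0 l de G20 V20 by (subst (asm) ennreal_le_iff) auto
    also have "\<dots> = K * (l * G2 + V2 / l)"
    proof -
      have d1: "1 - \<delta> \<noteq> 0" using de by simp
      show ?thesis using l d1 unfolding K_def by (intro alg) auto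
    qed
    finally show ?thesis .
  qed
  have "\<bar>inner_L2psi \<gamma> (caputo_psi \<gamma> \<delta> g1) v\<bar> \<le> 2 * K * sqrt G2 * sqrt V2"
    using G20 V20 K0 S6 by (intro amgm_opt) auto
  moreover have "2 * K = (1/\<gamma>) / Gamma (1-\<delta>) / (1-\<delta>)"
  proof -
    have "2 * K = c0 / (1 - \<delta>)" unfolding K_def using de by (intro two_div) simp
    thus ?thesis by (simp add: c0_def Ga_def)
  qed
  moreover have "norm_L2w (1-\<alpha>) 0 g1 = sqrt G2" "norm_L2w (-\<alpha>) (-1) v = sqrt V2"
    by (simp_all add: norm_L2w_def G2_def V2_def)
  ultimately show ?thesis by simp
qed

lemma main_i:
  fixes \<gamma> \<alpha> :: real and v :: "real \<Rightarrow> real"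
  assumes ga: "0 < \<gamma>" "\<gamma> \<le> 1" and al: "0 < \<alpha>" "\<alpha> < 1"
  and iv: "set_integrable lborel {0<..<1} (\<lambda>t. (v t)\<^sup>2 * omega (-\<alpha>) (-1) t)"
  shows "norm_L2psi \<gamma> v \<le> sqrt (1/\<gamma>) * norm_L2w (-\<alpha>) (-1) v"
proof -
  define V2 where "V2 = (\<integral>t\<in>{0<..<1}. (v t)\<^sup>2 * omega (-\<alpha>) (-1) t \<partial>lborel)"
  have pt: "indicator {0<..<1} t *\<^sub>R (v t * v t * psi_d \<gamma> t) \<le> indicator {0<..<1} t *\<^sub>R ((1/\<gamma>) * ((v t)\<^sup>2 * omega (-\<alpha>) (-1) t))" for t
  proof (cases "0 < t \<and> t < 1")
    case True
    have "\<bar>t\<bar> powr (1/\<gamma> - 1) \<le> 1" using True ga by (intro powr_le1) auto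
    also have "1 \<le> omega (-\<alpha>) (-1) t" using True al by (intro omega_ge1) auto
    finally have "psi_d \<gamma> t \<le> (1/\<gamma>) * omega (-\<alpha>) (-1) t"
      using ga by (simp add: psi_d_def divide_right_mono)
    hence "(v t)\<^sup>2 * psi_d \<gamma> t \<le> (v t)\<^sup>2 * ((1/\<gamma>) * omega (-\<alpha>) (-1) t)"
      by (intro mult_left_mono) auto
    thus ?thesis using True by (simp add: power2_eq_square algebra_simps)
  next
    case False
    thus ?thesis by simp
  qed
  have V20: "V2 \<ge> 0" unfolding V2_def set_lebesgue_integral_def
    by (intro integral_nonneg_AE) (auto simp: omega_nonneg split: split_indicator)
  have ip: "inner_L2psi \<gamma> v v \<le> (1/\<gamma>) * V2"
  proof (cases "integrable lborel (\<lambda>t. indicator {0<..<1} t *\<^sub>R (v t * v t * psi_d \<gamma> t))")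
    case True
    have "inner_L2psi \<gamma> v v = (\<integral>t. indicator {0<..<1} t *\<^sub>R (v t * v t * psi_d \<gamma> t) \<partial>lborel)"
      by (simp add: inner_L2psi_def set_lebesgue_integral_def)
    also have "\<dots> \<le> (\<integral>t. indicator {0<..<1} t *\<^sub>R ((1/\<gamma>) * ((v t)\<^sup>2 * omega (-\<alpha>) (-1) t)) \<partial>lborel)"
    proof (rule integral_mono[OF True _ pt])
      show "integrable lborel (\<lambda>t. indicator {0<..<1} t *\<^sub>R ((1/\<gamma>) * ((v t)\<^sup>2 * omega (-\<alpha>) (-1) t)))"
        using iv unfolding set_integrable_def
        by (simp add: integrable_mult_right mult.left_commute[of "indicator _ _"])
    qed
    also have "\<dots> = (1/\<gamma>) * V2"
      unfolding V2_def set_lebesgue_integral_def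
      by (simp add: mult.left_commute[of "indicator _ _"])
    finally show ?thesis .
  next
    case False
    hence "inner_L2psi \<gamma> v v = 0"
      by (simp add: inner_L2psi_def set_lebesgue_integral_def not_integrable_integral_eq)
    thus ?thesis using V20 ga by simp
  qed
  have "norm_L2psi \<gamma> v \<le> sqrt ((1/\<gamma>) * V2)"
    unfolding norm_L2psi_def using ip by simp
  also have "\<dots> = sqrt (1/\<gamma>) * sqrt V2"
    by (rule real_sqrt_mult)
  also have "sqrt V2 = norm_L2w (-\<alpha>) (-1) v"
    by (simp add: norm_L2w_def V2_def)
  finally show ?thesis .
qed

theorem lemma3p4:
  fixes \<gamma> \<delta> \<alpha> :: real and m :: nat
  assumes "0 < \<gamma>" "\<gamma> \<le> 1" "0 < \<delta>" "\<delta> < 1" "\<delta> < \<alpha>" "\<alpha> < 1" "m \<ge> 1"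
  shows "\<exists>c. \<forall>v g. in_0H \<gamma> \<delta> v \<and> in_Bm m \<alpha> v g \<longrightarrow>
           norm_L2psi \<gamma> v \<le> c * norm_L2w (- \<alpha>) (-1) v \<and>
           inner_L2psi \<gamma> (caputo_psi \<gamma> \<delta> (g 1)) v
             \<le> c * norm_L2w (1 - \<alpha>) 0 (g 1) * norm_L2w (- \<alpha>) (-1) v"
proof -
  define c2 where "c2 = (1/\<gamma>) / Gamma (1-\<delta>) / (1-\<delta>)"
  define c where "c = 1/\<gamma> + c2"
  have c2: "c2 \<ge> 0" using assms by (simp add: c2_def)
  have g1: "1 \<le> 1/\<gamma>" using assms by simp
  have s1: "sqrt (1/\<gamma>) \<le> c"
    using sqrt_le_self[OF g1] c2 by (simp add: c_def)
  show ?thesis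
  proof (intro exI allI impI conjI)
    fix v g assume h: "in_0H \<gamma> \<delta> v \<and> in_Bm m \<alpha> v g"
    hence B: "g 0 = v" "\<And>k. k \<le> m \<Longrightarrow> in_L2w (- \<alpha> + real k) (-1 + real k) (g k)"
      unfolding in_Bm_def by auto
    have L0: "in_L2w (-\<alpha>) (-1) v" using B(2)[of 0] B(1) by simp
    have L1': "in_L2w (- \<alpha> + real 1) (-1 + real 1) (g 1)" using B(2)[of 1] assms by simp
    have "- \<alpha> + real 1 = 1 - \<alpha>" "-1 + real 1 = (0::real)" by simp_all
    hence L1: "in_L2w (1 - \<alpha>) 0 (g 1)" using L1' by metis
    have n0: "norm_L2w a b w \<ge> 0" for a b w
      unfolding norm_L2w_def set_lebesgue_integral_def
      by (simp, intro integral_nonneg_AE) (auto simp: omega_nonneg split: split_indicator)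
    have "norm_L2psi \<gamma> v \<le> sqrt (1/\<gamma>) * norm_L2w (-\<alpha>) (-1) v"
      using L0 assms unfolding in_L2w_def by (intro main_i) auto
    also have "\<dots> \<le> c * norm_L2w (-\<alpha>) (-1) v" using s1 n0 by (intro mult_right_mono) auto
    finally show "norm_L2psi \<gamma> v \<le> c * norm_L2w (- \<alpha>) (-1) v" .
    have "inner_L2psi \<gamma> (caputo_psi \<gamma> \<delta> (g 1)) v \<le> c2 * norm_L2w (1 - \<alpha>) 0 (g 1) * norm_L2w (- \<alpha>) (-1) v"
      unfolding c2_def using L0 L1 assms unfolding in_L2w_def by (intro main_ii) auto
    also have "\<dots> \<le> c * norm_L2w (1 - \<alpha>) 0 (g 1) * norm_L2w (- \<alpha>) (-1) v"
      using c2 n0 assms by (intro mult_right_mono) (auto simp: c_def)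
    finally show "inner_L2psi \<gamma> (caputo_psi \<gamma> \<delta> (g 1)) v \<le> c * norm_L2w (1 - \<alpha>) 0 (g 1) * norm_L2w (- \<alpha>) (-1) v" .
  qed
qed

end
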